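(* Let $k\ge 1$, let $n_0,n_1,\dots,n_k$ be positive integers, $n^{*}=n_0+\cdots+n_k$, and $\sigma_0,\dots,\sigma_k>0$. Let $h:[0,\infty)\to[0,\infty)$ be such that $$\prod_{i=0}^{k}\sigma_i^{-n_i}\,h\!\left(\sum_{i=0}^{k}\sigma_i^{-2}\|\mathbf{x}_i\|^{2}\right)$$ is a probability density on $\mathbb{R}^{n^{*}}$, and let $(\mathbf{x}_0',\dots,\mathbf{x}_k')'$, $\mathbf{x}_i\in\mathbb{R}^{n_i}$, have this density. Let $s_0=\|\mathbf{x}_0\|^2$ and $f_i=\|\mathbf{x}_i\|^2/s_0$ for $i=1,\dots,k$. Then $(s_0,f_1,\dots,f_k)$ has density on $(0,\infty)^{k+1}$ $$\frac{\pi^{n^{*}/2}\,s_0^{n^{*}/2-1}}{\prod_{i=0}^{k}\left(\sigma_i^{n_i}\Gamma[n_i/2]\right)}\prod_{i=1}^{k}f_i^{n_i/2-1}\;h\!\left(s_0\sigma_0^{-2}\Big(1+\sigma_0^{2}\sum_{i=1}^{k}\sigma_i^{-2}f_i\Big)\right).$$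
   Context: $\|\cdot\|$ denotes the Euclidean norm. The resulting law is called the multivariate generalised gamma–beta type II distribution. *)

theory Defs
  imports "HOL-Probability.Probability"
begin

text \<open>Coordinates of R^{n*}: the vector x = (x_0',...,x_k')' is a function on the
finite index set of pairs (i,j) with i \<le> k and j < n i; x (i,j) is the j-th
coordinate of the block x_i \<in> R^{n_i}.\<close>

definition idx :: "nat \<Rightarrow> (nat \<Rightarrow> nat) \<Rightarrow> (nat \<times> nat) set" where
  "idx k n = {(i, j). i \<le> k \<and> j < n i}"

definition sqnorm :: "(nat \<Rightarrow> nat) \<Rightarrow> (nat \<times> nat \<Rightarrow> real) \<Rightarrow> nat \<Rightarrow> real" where
  "sqnorm n x i = (\<Sum>j<n i. (x (i, j))\<^sup>2)"

definition nstar :: "nat \<Rightarrow> (nat \<Rightarrow> nat) \<Rightarrow> nat" where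
  "nstar k n = (\<Sum>i\<le>k. n i)"

definition ggb_density ::
  "nat \<Rightarrow> (nat \<Rightarrow> nat) \<Rightarrow> (nat \<Rightarrow> real) \<Rightarrow> (real \<Rightarrow> real) \<Rightarrow> (nat \<times> nat \<Rightarrow> real) \<Rightarrow> real" where
  "ggb_density k n \<sigma> h x =
     (\<Prod>i\<le>k. inverse (\<sigma> i ^ n i)) * h (\<Sum>i\<le>k. inverse ((\<sigma> i)\<^sup>2) * sqnorm n x i)"

definition ggb_transformed_density ::
  "nat \<Rightarrow> (nat \<Rightarrow> nat) \<Rightarrow> (nat \<Rightarrow> real) \<Rightarrow> (real \<Rightarrow> real) \<Rightarrow> (nat \<Rightarrow> real) \<Rightarrow> real" where
  "ggb_transformed_density k n \<sigma> h y =
     (if (\<forall>i\<le>k. y i > 0) then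
        pi powr (real (nstar k n) / 2) * y 0 powr (real (nstar k n) / 2 - 1)
        / (\<Prod>i\<le>k. \<sigma> i ^ n i * Gamma (real (n i) / 2))
        * (\<Prod>i\<in>{1..k}. y i powr (real (n i) / 2 - 1))
        * h (y 0 * inverse ((\<sigma> 0)\<^sup>2) * (1 + (\<sigma> 0)\<^sup>2 * (\<Sum>i\<in>{1..k}. inverse ((\<sigma> i)\<^sup>2) * y i)))
      else 0)"

end

theory Submission
  imports Defs
begin

definition gdens :: "nat \<Rightarrow> real \<Rightarrow> ennreal" where
  "gdens m t = ennreal (pi powr (real m / 2) / Gamma (real m / 2) * t powr (real m / 2 - 1)) * indicator {0<..} t"

lemma gdens_measurable[measurable]: "gdens m \<in> borel_measurable borel"
  unfolding gdens_def by measurable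

lemma gdens_atMost:
  assumes "m > 0"
  shows "emeasure (density lborel (gdens m)) {..b} = ennreal (if b > 0 then unit_ball_vol (real m) * b powr (real m / 2) else 0)"
proof (cases "b > 0")
  case False
  have "emeasure (density lborel (gdens m)) {..b} = (\<integral>\<^sup>+t. gdens m t * indicator {..b} t \<partial>lborel)"
    by (simp add: emeasure_density)
  also have "\<dots> = (\<integral>\<^sup>+(t::real). 0 \<partial>lborel)"
    using False by (intro nn_integral_cong) (auto simp: gdens_def indicator_def)
  finally show ?thesis using False by simp
next
  case True
  define c where "c = pi powr (real m / 2) / Gamma (real m / 2)"
  have c0: "c \<ge> 0" unfolding c_def using assms by (auto intro!: divide_nonneg_pos Gamma_real_pos)
  have h0: "((\<lambda>x. x powr (real m / 2 - 1)) has_integral (b powr (real m / 2 - 1 + 1) / (real m / 2 - 1 + 1))) {0..b}"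
    using assms True by (intro has_integral_powr_from_0) auto
  have hi: "((\<lambda>x. c * x powr (real m / 2 - 1)) has_integral (c * (b powr (real m / 2) / (real m / 2)))) {0..b}"
    using has_integral_mult_right[OF h0, of c] by simp
  have "emeasure (density lborel (gdens m)) {..b} = (\<integral>\<^sup>+t. gdens m t * indicator {..b} t \<partial>lborel)"
    by (simp add: emeasure_density)
  also have "\<dots> = (\<integral>\<^sup>+t. ennreal (c * t powr (real m / 2 - 1)) * indicator {0..b} t \<partial>lborel)"
    by (intro nn_integral_cong_AE AE_I[of _ _ "{0}"]) (auto simp: gdens_def c_def indicator_def)
  also have "\<dots> = ennreal (c * (b powr (real m / 2) / (real m / 2)))"
    by (rule nn_integral_has_integral_lebesgue'[OF _ hi]) (use c0 in auto)
  also have "c * (b powr (real m / 2) / (real m / 2)) = unit_ball_vol (real m) * b powr (real m / 2)"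
  proof -
    have G: "Gamma (real m / 2 + 1) = real m / 2 * Gamma (real m / 2)"
      using assms by (intro Gamma_plus1) (auto dest: nonpos_Ints_nonpos)
    have "Gamma (real m / 2) > 0" using assms by (intro Gamma_real_pos) auto
    then show ?thesis using assms unfolding c_def unit_ball_vol_def G by (simp add: field_simps)
  qed
  finally show ?thesis using True by simp
qed

lemma sets_borel_atMost: "sets (borel::real measure) = sigma_sets UNIV (range (\<lambda>b. {..b}))"
  unfolding borel_eq_atMost by (rule sets_measure_of) auto

lemma block_atMost:
  assumes B: "finite B" "card B > 0"
  shows "emeasure (distr (PiM B (\<lambda>_. lborel)) lborel (\<lambda>z. \<Sum>p\<in>B. (z p)\<^sup>2)) {..b} =
         ennreal (if b > 0 then unit_ball_vol (real (card B)) * b powr (real (card B) / 2) else 0)"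
proof -
  interpret product_sigma_finite "\<lambda>_. lborel :: real measure" by standard
  have "emeasure (distr (PiM B (\<lambda>_. lborel)) lborel (\<lambda>z. \<Sum>p\<in>B. (z p)\<^sup>2)) {..b} =
        emeasure (PiM B (\<lambda>_. lborel)) ({z. (\<Sum>p\<in>B. (z p)\<^sup>2) \<le> b} \<inter> space (PiM B (\<lambda>_. lborel)))"
    by (subst emeasure_distr) (auto intro!: arg_cong2[where f=emeasure])
  also have "\<dots> = ennreal (if b > 0 then unit_ball_vol (real (card B)) * b powr (real (card B) / 2) else 0)"
  proof (cases "b > 0")
    case True
    have "{z. (\<Sum>p\<in>B. (z p)\<^sup>2) \<le> b} = {z. sqrt (\<Sum>p\<in>B. (z p)\<^sup>2) \<le> sqrt b}"
      by auto
    moreover have "sqrt b ^ card B = b powr (real (card B) / 2)"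
      using True by (simp add: powr_half_sqrt[symmetric] powr_realpow[symmetric] powr_powr)
    ultimately show ?thesis using True emeasure_cball_aux[OF B(1), of "sqrt b"] by simp
  next
    case False
    obtain p0 where p0: "p0 \<in> B" using B by (metis card_gt_0_iff ex_in_conv)
    have "{z. (\<Sum>p\<in>B. (z p)\<^sup>2) \<le> b} \<inter> space (PiM B (\<lambda>_. lborel)) \<subseteq>
          (\<Pi>\<^sub>E p\<in>B. if p = p0 then {0::real} else UNIV)"
    proof
      fix z assume z: "z \<in> {z. (\<Sum>p\<in>B. (z p)\<^sup>2) \<le> b} \<inter> space (PiM B (\<lambda>_. lborel))"
      hence "(\<Sum>p\<in>B. (z p)\<^sup>2) = 0" using False by (intro antisym sum_nonneg) auto
      hence "\<forall>p\<in>B. (z p)\<^sup>2 = 0" using B by (subst (asm) sum_nonneg_eq_0_iff) auto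
      thus "z \<in> (\<Pi>\<^sub>E p\<in>B. if p = p0 then {0} else UNIV)" using z p0 by (auto simp: space_PiM)
    qed
    note sub = this
    have "emeasure (PiM B (\<lambda>_. lborel)) ({z. (\<Sum>p\<in>B. (z p)\<^sup>2) \<le> b} \<inter> space (PiM B (\<lambda>_. lborel)))
        \<le> emeasure (PiM B (\<lambda>_. lborel)) (\<Pi>\<^sub>E p\<in>B. if p = p0 then {0::real} else UNIV)"
      by (rule emeasure_mono[OF sub]) (auto intro!: sets_PiM_I_finite B)
    also have "\<dots> = (\<Prod>p\<in>B. emeasure lborel (if p = p0 then {0::real} else UNIV))"
      using B by (subst emeasure_PiM) auto
    also have "\<dots> = 0" using B p0 by (intro prod_zero bexI[of _ p0]) auto
    finally show ?thesis using False by simp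
  qed
  finally show ?thesis .
qed

lemma block_law:
  assumes B: "finite B" "card B > 0"
  shows "distr (PiM B (\<lambda>_. lborel)) lborel (\<lambda>z. \<Sum>p\<in>B. (z p)\<^sup>2) = density lborel (gdens (card B))"
proof (rule measure_eqI_generator_eq[where E="range (\<lambda>b. {..b})" and \<Omega>=UNIV and A="\<lambda>i. {..real i}"])
  show "Int_stable (range (\<lambda>b::real. {..b}))"
    by (auto simp: Int_stable_def intro!: exI[of _ "min _ _"])
  show "range (\<lambda>b::real. {..b}) \<subseteq> Pow UNIV" by auto
  fix X assume "X \<in> range (\<lambda>b::real. {..b})"
  then obtain b where "X = {..b}" by auto
  then show "emeasure (distr (PiM B (\<lambda>_. lborel)) lborel (\<lambda>z. \<Sum>p\<in>B. (z p)\<^sup>2)) X = emeasure (density lborel (gdens (card B))) X"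
    using block_atMost[OF B] gdens_atMost[of "card B"] B by simp
next
  show "sets (distr (PiM B (\<lambda>_. lborel)) lborel (\<lambda>z. \<Sum>p\<in>B. (z p)\<^sup>2)) = sigma_sets UNIV (range (\<lambda>b::real. {..b}))"
    using sets_borel_atMost by simp
  show "sets (density lborel (gdens (card B))) = sigma_sets UNIV (range (\<lambda>b. {..b}))"
    using sets_borel_atMost by simp
  show "range (\<lambda>i::nat. {..real i}) \<subseteq> range (\<lambda>b. {..b})" by auto
  show "(\<Union>i::nat. {..real i}) = UNIV"
    by (auto simp: real_arch_simple)
  fix i :: nat
  show "emeasure (distr (PiM B (\<lambda>_. lborel)) lborel (\<lambda>z. \<Sum>p\<in>B. (z p)\<^sup>2)) {..real i} \<noteq> \<infinity>"
    using block_atMost[OF B] by simp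
qed

lemma sqnorm_meas:
  assumes "\<And>j. j < n i \<Longrightarrow> (i, j) \<in> I"
  shows "(\<lambda>x. sqnorm n x i) \<in> borel_measurable (PiM I (\<lambda>_. lborel))"
  unfolding sqnorm_def using assms by measurable

lemma sqnorm_meas_idx[measurable]:
  "i \<le> k \<Longrightarrow> (\<lambda>x. sqnorm n x i) \<in> borel_measurable (PiM (idx k n) (\<lambda>_. lborel))"
  by (rule sqnorm_meas) (auto simp: idx_def)

lemma sqnorm_meas_blk[measurable]:
  "(\<lambda>x. sqnorm n x i) \<in> borel_measurable (PiM ({i} \<times> {..<n i}) (\<lambda>_. lborel))"
  by (rule sqnorm_meas) auto

lemma idx_0: "idx 0 n = {0} \<times> {..<n 0}"
  by (auto simp: idx_def)

lemma idx_Suc: "idx (Suc k) n = idx k n \<union> ({Suc k} \<times> {..<n (Suc k)})"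
  by (auto simp: idx_def le_Suc_eq)

lemma finite_idx[simp]: "finite (idx k n)"
proof -
  have "idx k n \<subseteq> {..k} \<times> {..<Max (n ` {..k})+1}"
    by (auto simp: idx_def less_Suc_eq_le intro!: le_trans[OF less_imp_le Max_ge])
  thus ?thesis by (rule finite_subset) auto
qed

lemma blocks_emeasure:
  assumes A: "\<And>i. i \<le> k \<Longrightarrow> A i \<in> sets borel"
  shows "emeasure (PiM (idx k n) (\<lambda>_. lborel)) {x \<in> space (PiM (idx k n) (\<lambda>_. lborel)). \<forall>i\<le>k. sqnorm n x i \<in> A i}
       = (\<Prod>i\<le>k. emeasure (PiM ({i}\<times>{..<n i}) (\<lambda>_. lborel)) {z \<in> space (PiM ({i}\<times>{..<n i}) (\<lambda>_. lborel)). sqnorm n z i \<in> A i})"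
  using A
proof (induction k)
  case 0
  then show ?case by (simp add: idx_0)
next
  case (Suc k)
  interpret product_sigma_finite "\<lambda>_. lborel :: real measure" by standard
  define I where "I = idx k n"
  define J where "J = {Suc k} \<times> {..<n (Suc k)}"
  have IJ: "I \<inter> J = {}" by (auto simp: I_def J_def idx_def)
  have fin: "finite I" "finite J" by (auto simp: I_def J_def)
  interpret PI: finite_product_sigma_finite "\<lambda>_. lborel :: real measure" I by standard (rule fin)
  interpret PJ: finite_product_sigma_finite "\<lambda>_. lborel :: real measure" J by standard (rule fin)
  have U: "idx (Suc k) n = I \<union> J" by (simp add: idx_Suc I_def J_def)
  define S where "S = {x \<in> space (PiM I (\<lambda>_. lborel)). \<forall>i\<le>k. sqnorm n x i \<in> A i}"
  define C where "C = {z \<in> space (PiM J (\<lambda>_. lborel)). sqnorm n z (Suc k) \<in> A (Suc k)}"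
  have SC: "S \<in> sets (PiM I (\<lambda>_. lborel))" "C \<in> sets (PiM J (\<lambda>_. lborel))"
    using Suc.prems unfolding S_def C_def I_def J_def by measurable
  have sq: "sqnorm n (merge I J (x, y)) i = (if i \<le> k then sqnorm n x i else sqnorm n y i)"
    if "i \<le> Suc k" for x y i
    using that by (auto simp: sqnorm_def merge_def I_def J_def idx_def le_Suc_eq intro!: sum.cong)
  have pre: "merge I J -` {x \<in> space (PiM (I \<union> J) (\<lambda>_. lborel)). \<forall>i\<le>Suc k. sqnorm n x i \<in> A i}
      \<inter> space (PiM I (\<lambda>_. lborel) \<Otimes>\<^sub>M PiM J (\<lambda>_. lborel)) = S \<times> C"
    by (auto simp: S_def C_def sq space_pair_measure le_Suc_eq space_PiM)
  have "emeasure (PiM (idx (Suc k) n) (\<lambda>_. lborel)) {x \<in> space (PiM (idx (Suc k) n) (\<lambda>_. lborel)). \<forall>i\<le>Suc k. sqnorm n x i \<in> A i}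
      = emeasure (distr (PiM I (\<lambda>_. lborel) \<Otimes>\<^sub>M PiM J (\<lambda>_. lborel)) (PiM (I \<union> J) (\<lambda>_. lborel)) (merge I J))
          {x \<in> space (PiM (I \<union> J) (\<lambda>_. lborel)). \<forall>i\<le>Suc k. sqnorm n x i \<in> A i}"
    unfolding U distr_merge[OF IJ fin] ..
  also have "\<dots> = emeasure (PiM I (\<lambda>_. lborel) \<Otimes>\<^sub>M PiM J (\<lambda>_. lborel)) (S \<times> C)"
    apply (subst emeasure_distr)
    subgoal by measurable
    subgoal using Suc.prems unfolding U[symmetric] by measurable
    subgoal using pre by simp
    done
  also have "\<dots> = emeasure (PiM I (\<lambda>_. lborel)) S * emeasure (PiM J (\<lambda>_. lborel)) C"
    using SC by (rule PJ.emeasure_pair_measure_Times)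
  also have "emeasure (PiM I (\<lambda>_. lborel)) S = (\<Prod>i\<le>k. emeasure (PiM ({i}\<times>{..<n i}) (\<lambda>_. lborel)) {z \<in> space (PiM ({i}\<times>{..<n i}) (\<lambda>_. lborel)). sqnorm n z i \<in> A i})"
    unfolding S_def I_def using Suc by simp
  finally show ?case by (simp add: C_def J_def mult.commute)
qed

lemma sf_gdens: "sigma_finite_measure (density lborel (gdens m))"
  by (subst sigma_finite_measure.sigma_finite_iff_density_finite[OF sigma_finite_lborel]) (auto simp: gdens_def indicator_def)

lemma PiM_density:
  fixes g :: "'i \<Rightarrow> real \<Rightarrow> ennreal"
  assumes I: "finite I" and g[measurable]: "\<And>i. g i \<in> borel_measurable borel"
    and sf: "\<And>i. sigma_finite_measure (density lborel (g i))"
  shows "PiM I (\<lambda>i. density lborel (g i)) = density (PiM I (\<lambda>_. lborel)) (\<lambda>r. \<Prod>i\<in>I. g i (r i))"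
proof -
  interpret L: product_sigma_finite "\<lambda>_. lborel :: real measure" by standard
  interpret D: product_sigma_finite "\<lambda>i. density lborel (g i)"
    unfolding product_sigma_finite_def using sf by auto
  show ?thesis
  proof (rule D.PiM_eqI[symmetric, OF I])
    show "sets (density (PiM I (\<lambda>_. lborel)) (\<lambda>r. \<Prod>i\<in>I. g i (r i))) = sets (PiM I (\<lambda>i. density lborel (g i)))"
      by (simp cong: sets_PiM_cong)
    fix A assume A: "\<And>i. i \<in> I \<Longrightarrow> A i \<in> sets (density lborel (g i))"
    hence A': "\<And>i. i \<in> I \<Longrightarrow> A i \<in> sets borel" by simp
    have "emeasure (density (PiM I (\<lambda>_. lborel)) (\<lambda>r. \<Prod>i\<in>I. g i (r i))) (Pi\<^sub>E I A)
        = (\<integral>\<^sup>+r. (\<Prod>i\<in>I. g i (r i)) * indicator (Pi\<^sub>E I A) r \<partial>PiM I (\<lambda>_. lborel))"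
      using A' I by (subst emeasure_density) (auto intro!: sets_PiM_I_finite)
    also have "\<dots> = (\<integral>\<^sup>+r. (\<Prod>i\<in>I. g i (r i) * indicator (A i) (r i)) \<partial>PiM I (\<lambda>_. lborel))"
    proof (intro nn_integral_cong)
      fix r assume "r \<in> space (PiM I (\<lambda>_. lborel :: real measure))"
      hence r: "r \<in> extensional I" by (simp add: space_PiM PiE_def)
      show "(\<Prod>i\<in>I. g i (r i)) * indicator (Pi\<^sub>E I A) r = (\<Prod>i\<in>I. g i (r i) * indicator (A i) (r i))"
        using r I by (auto simp: prod.distrib indicator_def PiE_def Pi_def prod_zero_iff)
    qed
    also have "\<dots> = (\<Prod>i\<in>I. \<integral>\<^sup>+t. g i t * indicator (A i) t \<partial>lborel)"
      using A' by (intro L.product_nn_integral_prod I) auto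
    also have "\<dots> = (\<Prod>i\<in>I. emeasure (density lborel (g i)) (A i))"
      using A' by (intro prod.cong refl) (simp add: emeasure_density)
    finally show "emeasure (density (PiM I (\<lambda>_. lborel)) (\<lambda>r. \<Prod>i\<in>I. g i (r i))) (Pi\<^sub>E I A) = (\<Prod>i\<in>I. emeasure (density lborel (g i)) (A i))" .
  qed
qed

lemma blk_sum: "(\<Sum>p\<in>{i}\<times>{..<m}. (z p)\<^sup>2) = (\<Sum>j<m. (z (i,j))\<^sup>2)"
proof -
  have "{i}\<times>{..<m} = Pair i ` {..<m}" by auto
  thus ?thesis by (simp add: sum.reindex inj_on_def)
qed

lemma R_law:
  assumes n: "\<forall>i\<le>k. n i > 0"
  shows "distr (PiM (idx k n) (\<lambda>_. lborel)) (PiM {..k} (\<lambda>_. lborel)) (\<lambda>x. restrict (\<lambda>i. sqnorm n x i) {..k})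
       = density (PiM {..k} (\<lambda>_. lborel)) (\<lambda>r. \<Prod>i\<le>k. gdens (n i) (r i))"
proof -
  interpret D: product_sigma_finite "\<lambda>i. density lborel (gdens (n i))"
    unfolding product_sigma_finite_def using sf_gdens by auto
  have "distr (PiM (idx k n) (\<lambda>_. lborel)) (PiM {..k} (\<lambda>_. lborel)) (\<lambda>x. restrict (\<lambda>i. sqnorm n x i) {..k})
      = PiM {..k} (\<lambda>i. density lborel (gdens (n i)))"
  proof (rule D.PiM_eqI)
    show "sets (distr (PiM (idx k n) (\<lambda>_. lborel)) (PiM {..k} (\<lambda>_. lborel)) (\<lambda>x. restrict (\<lambda>i. sqnorm n x i) {..k})) = sets (PiM {..k} (\<lambda>i. density lborel (gdens (n i))))"
      by (simp cong: sets_PiM_cong)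
    fix A assume A: "\<And>i. i \<in> {..k} \<Longrightarrow> A i \<in> sets (density lborel (gdens (n i)))"
    hence A': "\<And>i. i \<le> k \<Longrightarrow> A i \<in> sets borel" by simp
    have "emeasure (distr (PiM (idx k n) (\<lambda>_. lborel)) (PiM {..k} (\<lambda>_. lborel)) (\<lambda>x. restrict (\<lambda>i. sqnorm n x i) {..k})) (Pi\<^sub>E {..k} A)
       = emeasure (PiM (idx k n) (\<lambda>_. lborel)) {x \<in> space (PiM (idx k n) (\<lambda>_. lborel)). \<forall>i\<le>k. sqnorm n x i \<in> A i}"
      using A' by (subst emeasure_distr) (auto intro!: sets_PiM_I_finite arg_cong2[where f=emeasure] measurable_restrict)
    also have "\<dots> = (\<Prod>i\<le>k. emeasure (PiM ({i}\<times>{..<n i}) (\<lambda>_. lborel)) {z \<in> space (PiM ({i}\<times>{..<n i}) (\<lambda>_. lborel)). sqnorm n z i \<in> A i})"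
      using A' by (rule blocks_emeasure)
    also have "\<dots> = (\<Prod>i\<le>k. emeasure (density lborel (gdens (n i))) (A i))"
    proof (intro prod.cong refl)
      fix i assume i: "i \<in> {..k}"
      have "density lborel (gdens (n i)) = distr (PiM ({i}\<times>{..<n i}) (\<lambda>_. lborel)) lborel (\<lambda>z. \<Sum>p\<in>{i}\<times>{..<n i}. (z p)\<^sup>2)"
        using block_law[of "{i}\<times>{..<n i}"] n i by (simp add: card_cartesian_product)
      also have "\<dots> = distr (PiM ({i}\<times>{..<n i}) (\<lambda>_. lborel)) lborel (\<lambda>z. sqnorm n z i)"
        by (simp add: blk_sum sqnorm_def)
      finally show "emeasure (PiM ({i}\<times>{..<n i}) (\<lambda>_. lborel)) {z \<in> space (PiM ({i}\<times>{..<n i}) (\<lambda>_. lborel)). sqnorm n z i \<in> A i} = emeasure (density lborel (gdens (n i))) (A i)"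
        using A' i by (simp add: emeasure_distr Collect_conj_eq Int_commute vimage_def)
    qed
    finally show "emeasure (distr (PiM (idx k n) (\<lambda>_. lborel)) (PiM {..k} (\<lambda>_. lborel)) (\<lambda>x. restrict (\<lambda>i. sqnorm n x i) {..k})) (Pi\<^sub>E {..k} A) = (\<Prod>i\<le>k. emeasure (density lborel (gdens (n i))) (A i))" .
  qed simp
  also have "\<dots> = density (PiM {..k} (\<lambda>_. lborel)) (\<lambda>r. \<Prod>i\<le>k. gdens (n i) (r i))"
    by (rule PiM_density) (auto simp: sf_gdens)
  finally show ?thesis .
qed

lemma PiM_scale_distr:
  assumes J: "finite J" and c: "c > (0::real)"
  shows "distr (PiM J (\<lambda>_. lborel)) (PiM J (\<lambda>_. lborel)) (\<lambda>y. \<lambda>i\<in>J. c * y i)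
       = density (PiM J (\<lambda>_. lborel)) (\<lambda>_. ennreal (inverse c ^ card J))"
proof -
  interpret L: product_sigma_finite "\<lambda>_. lborel :: real measure" by standard
  have sfc: "sigma_finite_measure (density lborel (\<lambda>_::real. ennreal (inverse c)))"
    by (subst sigma_finite_measure.sigma_finite_iff_density_finite[OF sigma_finite_lborel]) auto
  interpret D: product_sigma_finite "\<lambda>i. density lborel (\<lambda>_::real. ennreal (inverse c))"
    unfolding product_sigma_finite_def using sfc by auto
  have dm: "distr lborel borel ((*) c) = density lborel (\<lambda>_. ennreal (inverse c))"
    using lborel_distr_mult[of c] c by simp
  have "distr (PiM J (\<lambda>_. lborel)) (PiM J (\<lambda>_. lborel)) (\<lambda>y. \<lambda>i\<in>J. c * y i)
      = PiM J (\<lambda>i. density lborel (\<lambda>_::real. ennreal (inverse c)))"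
  proof (rule D.PiM_eqI[OF J])
    show "sets (distr (PiM J (\<lambda>_. lborel)) (PiM J (\<lambda>_. lborel)) (\<lambda>y. \<lambda>i\<in>J. c * y i)) = sets (PiM J (\<lambda>i. density lborel (\<lambda>_::real. ennreal (inverse c))))"
      by (simp cong: sets_PiM_cong)
    fix A assume A: "\<And>i. i \<in> J \<Longrightarrow> A i \<in> sets (density lborel (\<lambda>_::real. ennreal (inverse c)))"
    hence A': "\<And>i. i \<in> J \<Longrightarrow> A i \<in> sets borel" by simp
    have A'': "\<And>i. i \<in> J \<Longrightarrow> (*) c -` A i \<in> sets borel"
      by (rule measurable_sets_borel[OF _ A']) auto
    have pre: "(\<lambda>y. \<lambda>i\<in>J. c * y i) -` Pi\<^sub>E J A \<inter> space (PiM J (\<lambda>_. lborel)) = Pi\<^sub>E J (\<lambda>i. (*) c -` A i)"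
      by (auto simp: space_PiM PiE_def Pi_def extensional_def)
    have "emeasure (distr (PiM J (\<lambda>_. lborel)) (PiM J (\<lambda>_. lborel)) (\<lambda>y. \<lambda>i\<in>J. c * y i)) (Pi\<^sub>E J A)
        = emeasure (PiM J (\<lambda>_. lborel)) (Pi\<^sub>E J (\<lambda>i. (*) c -` A i))"
      using A' J by (subst emeasure_distr) (auto intro!: sets_PiM_I_finite measurable_restrict simp: pre)
    also have "\<dots> = (\<Prod>i\<in>J. emeasure lborel ((*) c -` A i))"
      using A'' J by (subst L.emeasure_PiM) auto
    also have "\<dots> = (\<Prod>i\<in>J. emeasure (density lborel (\<lambda>_::real. ennreal (inverse c))) (A i))"
    proof (intro prod.cong refl)
      fix i assume "i \<in> J"
      hence "A i \<in> sets borel" by (rule A')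
      thus "emeasure lborel ((*) c -` A i) = emeasure (density lborel (\<lambda>_::real. ennreal (inverse c))) (A i)"
        unfolding dm[symmetric] by (subst emeasure_distr) auto
    qed
    finally show "emeasure (distr (PiM J (\<lambda>_. lborel)) (PiM J (\<lambda>_. lborel)) (\<lambda>y. \<lambda>i\<in>J. c * y i)) (Pi\<^sub>E J A) = (\<Prod>i\<in>J. emeasure (density lborel (\<lambda>_::real. ennreal (inverse c))) (A i))" .
  qed
  also have "\<dots> = density (PiM J (\<lambda>_. lborel)) (\<lambda>r. \<Prod>i\<in>J. ennreal (inverse c))"
    by (rule PiM_density[OF J]) (auto simp: sfc)
  also have "\<dots> = density (PiM J (\<lambda>_. lborel)) (\<lambda>_. ennreal (inverse c ^ card J))"
    using c by (simp add: ennreal_power)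
  finally show ?thesis .
qed

lemma PiM_scale:
  assumes J: "finite J" and c: "c > (0::real)" and f[measurable]: "f \<in> borel_measurable (PiM J (\<lambda>_. lborel))"
  shows "(\<integral>\<^sup>+r. f r \<partial>PiM J (\<lambda>_. lborel)) = ennreal (c ^ card J) * (\<integral>\<^sup>+y. f (\<lambda>i\<in>J. c * y i) \<partial>PiM J (\<lambda>_. lborel))"
proof -
  have "(\<integral>\<^sup>+y. f (\<lambda>i\<in>J. c * y i) \<partial>PiM J (\<lambda>_. lborel))
      = (\<integral>\<^sup>+r. f r \<partial>distr (PiM J (\<lambda>_. lborel)) (PiM J (\<lambda>_. lborel)) (\<lambda>y. \<lambda>i\<in>J. c * y i))"
    by (subst nn_integral_distr) (auto intro!: measurable_restrict)
  also have "\<dots> = (\<integral>\<^sup>+r. ennreal (inverse c ^ card J) * f r \<partial>PiM J (\<lambda>_. lborel))"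
    by (simp add: PiM_scale_distr[OF J c] nn_integral_density)
  also have "\<dots> = ennreal (inverse c ^ card J) * (\<integral>\<^sup>+r. f r \<partial>PiM J (\<lambda>_. lborel))"
    by (rule nn_integral_cmult) simp
  finally have "ennreal (c ^ card J) * (\<integral>\<^sup>+y. f (\<lambda>i\<in>J. c * y i) \<partial>PiM J (\<lambda>_. lborel))
      = ennreal (c ^ card J) * ennreal (inverse c ^ card J) * (\<integral>\<^sup>+r. f r \<partial>PiM J (\<lambda>_. lborel))"
    by (simp add: mult.assoc)
  also have "ennreal (c ^ card J) * ennreal (inverse c ^ card J) = 1"
    using c by (simp add: ennreal_mult'[symmetric] power_mult_distrib[symmetric])
  finally show ?thesis unfolding restrict_def by simp
qed

definition Umap :: "nat \<Rightarrow> (nat \<Rightarrow> real) \<Rightarrow> (nat \<Rightarrow> real)" where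
  "Umap k y = (\<lambda>i\<in>{..k}. if i = 0 then y 0 else y 0 * y i)"

lemma Umap_meas[measurable]: "Umap k \<in> measurable (PiM {..k} (\<lambda>_. lborel)) (PiM {..k} (\<lambda>_. lborel))"
  unfolding Umap_def by (intro measurable_restrict) auto

lemma CV:
  fixes \<Phi> :: "(nat \<Rightarrow> real) \<Rightarrow> ennreal"
  assumes Phi[measurable]: "\<Phi> \<in> borel_measurable (PiM {..k} (\<lambda>_. lborel))"
  shows "(\<integral>\<^sup>+r. (if \<forall>i\<le>k. 0 < r i then \<Phi> r else 0) \<partial>PiM {..k} (\<lambda>_. lborel))
       = (\<integral>\<^sup>+y. (if \<forall>i\<le>k. 0 < y i then \<Phi> (Umap k y) * ennreal (y 0 ^ k) else 0) \<partial>PiM {..k} (\<lambda>_. lborel))"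
proof -
  interpret L: product_sigma_finite "\<lambda>_. lborel :: real measure" by standard
  define J where "J = {1..k}"
  have J: "finite J" "0 \<notin> J" "card J = k" by (auto simp: J_def)
  have K: "{..k} = insert 0 J" by (auto simp: J_def)
  define F where "F = (\<lambda>r. if \<forall>i\<le>k. 0 < r i then \<Phi> r else 0)"
  define G where "G = (\<lambda>y. if \<forall>i\<le>k. 0 < y i then \<Phi> (Umap k y) * ennreal (y 0 ^ k) else 0)"
  have Fm: "F \<in> borel_measurable (PiM (insert 0 J) (\<lambda>_. lborel))"
    unfolding K[symmetric] F_def by measurable
  have Gm: "G \<in> borel_measurable (PiM (insert 0 J) (\<lambda>_. lborel))"
    unfolding K[symmetric] G_def by measurable
  have "integral\<^sup>N (PiM {..k} (\<lambda>_. lborel)) F = integral\<^sup>N (PiM (insert 0 J) (\<lambda>_. lborel)) F"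
    by (simp only: K)
  also have "\<dots> = (\<integral>\<^sup>+t. \<integral>\<^sup>+x. F (x(0 := t)) \<partial>PiM J (\<lambda>_. lborel) \<partial>lborel)"
    by (rule L.product_nn_integral_insert_rev[OF J(1,2) Fm])
  also have "\<dots> = (\<integral>\<^sup>+t. \<integral>\<^sup>+x. G (x(0 := t)) \<partial>PiM J (\<lambda>_. lborel) \<partial>lborel)"
  proof (rule nn_integral_cong)
    fix t :: real
    show "(\<integral>\<^sup>+x. F (x(0 := t)) \<partial>PiM J (\<lambda>_. lborel)) = (\<integral>\<^sup>+x. G (x(0 := t)) \<partial>PiM J (\<lambda>_. lborel))"
    proof (cases "t > 0")
      case False
      thus ?thesis by (intro nn_integral_cong) (auto simp: F_def G_def)
    next
      case True
      have upd: "(\<lambda>x. x(0 := t)) \<in> measurable (PiM J (\<lambda>_. lborel)) (PiM (insert 0 J) (\<lambda>_. lborel))"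
        by (rule measurable_fun_upd[where J=J]) auto
      have fm: "(\<lambda>x. F (x(0 := t))) \<in> borel_measurable (PiM J (\<lambda>_. lborel))"
        using measurable_comp[OF upd Fm] by (simp add: comp_def)
      have "(\<integral>\<^sup>+x. F (x(0 := t)) \<partial>PiM J (\<lambda>_. lborel))
          = ennreal (t ^ card J) * (\<integral>\<^sup>+y. F ((\<lambda>i\<in>J. t * y i)(0 := t)) \<partial>PiM J (\<lambda>_. lborel))"
        by (rule PiM_scale[OF J(1) True fm])
      also have "\<dots> = (\<integral>\<^sup>+y. ennreal (t ^ k) * F ((\<lambda>i\<in>J. t * y i)(0 := t)) \<partial>PiM J (\<lambda>_. lborel))"
      proof -
        have "(\<lambda>y. F ((\<lambda>i\<in>J. t * y i)(0 := t))) \<in> borel_measurable (PiM J (\<lambda>_. lborel))"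
          using measurable_comp[OF measurable_restrict[of J "\<lambda>i y. t * y i" "PiM J (\<lambda>_. lborel)" "\<lambda>_. lborel"] fm]
          by (simp add: comp_def)
        thus ?thesis using J by (subst nn_integral_cmult) auto
      qed
      also have "\<dots> = (\<integral>\<^sup>+x. G (x(0 := t)) \<partial>PiM J (\<lambda>_. lborel))"
      proof (intro nn_integral_cong)
        fix y assume "y \<in> space (PiM J (\<lambda>_. lborel :: real measure))"
        hence ye: "y \<in> extensional J" by (simp add: space_PiM PiE_def)
        have U: "Umap k (y(0 := t)) = (\<lambda>i\<in>J. t * y i)(0 := t)"
          using ye J by (auto simp: Umap_def K extensional_def fun_eq_iff)
        have C: "(\<forall>i\<le>k. 0 < ((\<lambda>i\<in>J. t * y i)(0 := t)) i) \<longleftrightarrow> (\<forall>i\<le>k. 0 < (y(0 := t)) i)"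
          using True by (auto simp: J_def zero_less_mult_iff)
        show "ennreal (t ^ k) * F ((\<lambda>i\<in>J. t * y i)(0 := t)) = G (y(0 := t))"
        proof (cases "\<forall>i\<le>k. 0 < (y(0 := t)) i")
          case T: True
          hence T2: "\<forall>i\<le>k. 0 < ((\<lambda>i\<in>J. t * y i)(0 := t)) i" using C by blast
          show ?thesis unfolding F_def G_def if_P[OF T] if_P[OF T2] U by (simp add: mult.commute)
        next
          case T: False
          hence T2: "\<not> (\<forall>i\<le>k. 0 < ((\<lambda>i\<in>J. t * y i)(0 := t)) i)" using C by blast
          show ?thesis unfolding F_def G_def if_not_P[OF T] if_not_P[OF T2] by simp
        qed
      qed
      finally show ?thesis .
    qed
  qed
  also have "\<dots> = integral\<^sup>N (PiM (insert 0 J) (\<lambda>_. lborel)) G"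
    by (rule L.product_nn_integral_insert_rev[OF J(1,2) Gm, symmetric])
  also have "\<dots> = integral\<^sup>N (PiM {..k} (\<lambda>_. lborel)) G"
    by (simp only: K)
  finally show ?thesis unfolding F_def G_def .
qed

lemma enn_aux:
  fixes a b c :: real and z :: ennreal
  assumes "0 \<le> a" "0 \<le> b" "0 \<le> c"
  shows "ennreal a * (ennreal b * z) * ennreal c = ennreal (a * b * c) * z"
  using assms by (simp add: ennreal_mult mult_ac)

lemma alg_aux:
  fixes S G Y a Z p Q H :: real
  assumes "S \<noteq> 0" "G \<noteq> 0" "Y * a = Z"
  shows "p / G * Y * Q * (inverse S * H) * a = p * Z / (S * G) * Q * H"
  using assms by (auto simp: field_simps)

lemma dens_alg:
  fixes y :: "nat \<Rightarrow> real"
  assumes y: "\<forall>i\<le>k. 0 < y i" and s: "\<forall>i\<le>k. \<sigma> i > 0" and n: "\<forall>i\<le>k. n i > 0"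
  defines "u \<equiv> Umap k y"
  shows "(\<Prod>i\<le>k. pi powr (real (n i) / 2) / Gamma (real (n i) / 2) * u i powr (real (n i) / 2 - 1))
          * ((\<Prod>i\<le>k. inverse (\<sigma> i ^ n i)) * h (\<Sum>i\<le>k. inverse ((\<sigma> i)\<^sup>2) * u i)) * y 0 ^ k
       = pi powr (real (nstar k n) / 2) * y 0 powr (real (nstar k n) / 2 - 1)
        / (\<Prod>i\<le>k. \<sigma> i ^ n i * Gamma (real (n i) / 2))
        * (\<Prod>i\<in>{1..k}. y i powr (real (n i) / 2 - 1))
        * h (y 0 * inverse ((\<sigma> 0)\<^sup>2) * (1 + (\<sigma> 0)\<^sup>2 * (\<Sum>i\<in>{1..k}. inverse ((\<sigma> i)\<^sup>2) * y i)))"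
proof -
  define w where "w i = (if i = 0 then 1 else y i)" for i
  define N where "N = real (nstar k n)"
  have K: "{..k} = insert 0 {1..k}" by auto
  have y0: "y 0 > 0" using y by auto
  have u: "u i = y 0 * w i" if "i \<le> k" for i
    using that by (simp add: u_def Umap_def w_def)
  have P1: "(\<Prod>i\<le>k. pi powr (real (n i) / 2) / Gamma (real (n i) / 2) * u i powr (real (n i) / 2 - 1))
      = (\<Prod>i\<le>k. pi powr (real (n i) / 2)) / (\<Prod>i\<le>k. Gamma (real (n i) / 2))
        * (\<Prod>i\<le>k. y 0 powr (real (n i) / 2 - 1)) * (\<Prod>i\<le>k. w i powr (real (n i) / 2 - 1))"
    by (simp add: u prod.distrib powr_mult prod_dividef)
  have P2: "(\<Prod>i\<le>k. pi powr (real (n i) / 2)) = pi powr (N / 2)"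
    by (simp add: powr_sum[symmetric] N_def nstar_def sum_divide_distrib)
  have P3: "(\<Prod>i\<le>k. y 0 powr (real (n i) / 2 - 1)) * y 0 ^ k = y 0 powr (N / 2 - 1)"
  proof -
    have "(\<Prod>i\<le>k. y 0 powr (real (n i) / 2 - 1)) = y 0 powr (\<Sum>i\<le>k. (real (n i) / 2 - 1))"
      using y0 by (simp add: powr_sum)
    also have "(\<Sum>i\<le>k. (real (n i) / 2 - 1)) = N / 2 - 1 - real k"
      by (simp add: sum_subtractf N_def nstar_def sum_divide_distrib)
    finally have "(\<Prod>i\<le>k. y 0 powr (real (n i) / 2 - 1)) * y 0 ^ k = y 0 powr (N / 2 - 1 - real k) * y 0 powr real k"
      using y0 by (simp add: powr_realpow)
    also have "\<dots> = y 0 powr (N / 2 - 1)" by (simp add: powr_add[symmetric])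
    finally show ?thesis .
  qed
  have P4: "(\<Prod>i\<le>k. w i powr (real (n i) / 2 - 1)) = (\<Prod>i\<in>{1..k}. y i powr (real (n i) / 2 - 1))"
    unfolding K by (subst prod.insert) (auto simp: w_def intro!: prod.cong)
  have P5: "(\<Prod>i\<le>k. inverse (\<sigma> i ^ n i)) = inverse (\<Prod>i\<le>k. \<sigma> i ^ n i)"
    using prod_inversef[of "\<lambda>i. \<sigma> i ^ n i" "{..k}"] by (simp add: o_def)
  have P6: "(\<Sum>i\<le>k. inverse ((\<sigma> i)\<^sup>2) * u i) = y 0 * inverse ((\<sigma> 0)\<^sup>2) * (1 + (\<sigma> 0)\<^sup>2 * (\<Sum>i\<in>{1..k}. inverse ((\<sigma> i)\<^sup>2) * y i))"
  proof -
    have "(\<Sum>i\<le>k. inverse ((\<sigma> i)\<^sup>2) * u i) = inverse ((\<sigma> 0)\<^sup>2) * y 0 + (\<Sum>i\<in>{1..k}. inverse ((\<sigma> i)\<^sup>2) * (y 0 * y i))"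
      unfolding K by (subst sum.insert) (auto simp: u w_def intro!: sum.cong)
    also have "\<dots> = inverse ((\<sigma> 0)\<^sup>2) * y 0 + y 0 * (\<Sum>i\<in>{1..k}. inverse ((\<sigma> i)\<^sup>2) * y i)"
      by (simp add: sum_distrib_left mult_ac)
    also have "\<dots> = y 0 * inverse ((\<sigma> 0)\<^sup>2) * (1 + (\<sigma> 0)\<^sup>2 * (\<Sum>i\<in>{1..k}. inverse ((\<sigma> i)\<^sup>2) * y i))"
    proof -
      have "(\<sigma> 0)\<^sup>2 \<noteq> 0" using s by auto
      thus ?thesis by (simp add: distrib_left mult_ac)
    qed
    finally show ?thesis .
  qed
  have nz1: "(\<Prod>i\<le>k. \<sigma> i ^ n i) \<noteq> 0" using s by (auto simp: prod_zero_iff)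
  have nz2: "(\<Prod>i\<le>k. Gamma (real (n i) / 2)) \<noteq> 0"
  proof -
    have "\<forall>i\<le>k. Gamma (real (n i) / 2) > 0" using n by (auto intro!: Gamma_real_pos)
    thus ?thesis by (auto simp: prod_zero_iff)
  qed
  have P7: "(\<Prod>i\<le>k. \<sigma> i ^ n i * Gamma (real (n i) / 2)) = (\<Prod>i\<le>k. \<sigma> i ^ n i) * (\<Prod>i\<le>k. Gamma (real (n i) / 2))"
    by (rule prod.distrib)
  show ?thesis
    unfolding P1 P2 P4 P5 P6 P7 N_def[symmetric]
    by (rule alg_aux[OF nz1 nz2 P3])
qed

theorem mainTheorem6:
  fixes M :: "'a measure" and X :: "'a \<Rightarrow> (nat \<times> nat \<Rightarrow> real)"
    and k :: nat and n :: "nat \<Rightarrow> nat" and \<sigma> :: "nat \<Rightarrow> real" and h :: "real \<Rightarrow> real"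
  assumes "prob_space M"
    and "k \<ge> 1"
    and "\<forall>i\<le>k. n i > 0"
    and "\<forall>i\<le>k. \<sigma> i > 0"
    and "\<forall>t\<ge>0. h t \<ge> 0"
    and "distributed M (PiM (idx k n) (\<lambda>_. lborel)) X (\<lambda>x. ennreal (ggb_density k n \<sigma> h x))"
  shows "distributed M (PiM {..k} (\<lambda>_. lborel))
           (\<lambda>\<omega>. restrict (\<lambda>i. if i = 0 then sqnorm n (X \<omega>) 0
                              else sqnorm n (X \<omega>) i / sqnorm n (X \<omega>) 0) {..k})
           (\<lambda>y. ennreal (ggb_transformed_density k n \<sigma> h y))"
proof -
  note npos = assms(3) and spos = assms(4) and hpos = assms(5)
  let ?I = "PiM (idx k n) (\<lambda>_. lborel :: real measure)"
  let ?K = "PiM {..k} (\<lambda>_. lborel :: real measure)"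
  have Xm[measurable]: "X \<in> measurable M ?I"
    and fm[measurable]: "(\<lambda>x. ennreal (ggb_density k n \<sigma> h x)) \<in> borel_measurable ?I"
    and deq: "distr M ?I X = density ?I (\<lambda>x. ennreal (ggb_density k n \<sigma> h x))"
    using assms(6) by (auto simp: distributed_def)
  define P where "P = (\<Prod>i\<le>k. inverse (\<sigma> i ^ n i))"
  have Ppos: "P > 0" unfolding P_def using spos by (auto intro!: prod_pos)
  have sq_nonneg: "0 \<le> sqnorm n x i" for x i unfolding sqnorm_def by (auto intro!: sum_nonneg)
  have arg_nonneg: "0 \<le> (\<Sum>i\<le>k. inverse ((\<sigma> i)\<^sup>2) * sqnorm n x i)" for x
    by (auto intro!: sum_nonneg simp: sq_nonneg)
  have g_nonneg: "0 \<le> ggb_density k n \<sigma> h x" for x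
    unfolding ggb_density_def P_def[symmetric] using Ppos hpos arg_nonneg[of x] by auto
  have gm[measurable]: "ggb_density k n \<sigma> h \<in> borel_measurable ?I"
  proof -
    have "(\<lambda>x. enn2real (ennreal (ggb_density k n \<sigma> h x))) \<in> borel_measurable ?I" by measurable
    thus ?thesis using g_nonneg by simp
  qed
  define sec where "sec t = (\<lambda>p\<in>idx k n. if p = (0, 0) then \<sigma> 0 * sqrt t else 0)" for t
  have secm[measurable]: "sec \<in> measurable lborel ?I"
    unfolding sec_def by (intro measurable_restrict) auto
  have sec_sq: "(\<Sum>i\<le>k. inverse ((\<sigma> i)\<^sup>2) * sqnorm n (sec t) i) = t" if t: "t \<ge> 0" for t
  proof -
    have "sqnorm n (sec t) i = (if i = 0 then (\<sigma> 0)\<^sup>2 * t else 0)" if i: "i \<le> k" for i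
    proof -
      have "sqnorm n (sec t) i = (\<Sum>j<n i. (if i = 0 \<and> j = 0 then (\<sigma> 0)\<^sup>2 * t else 0))"
        unfolding sqnorm_def using i t by (intro sum.cong) (auto simp: sec_def idx_def power_mult_distrib)
      also have "\<dots> = (if i = 0 then (\<sigma> 0)\<^sup>2 * t else 0)"
        using npos i by (cases "i = 0") auto
      finally show ?thesis .
    qed
    hence "(\<Sum>i\<le>k. inverse ((\<sigma> i)\<^sup>2) * sqnorm n (sec t) i) = (\<Sum>i\<le>k. if i = 0 then inverse ((\<sigma> i)\<^sup>2) * ((\<sigma> 0)\<^sup>2 * t) else 0)"
      by (intro sum.cong) auto
    also have "\<dots> = t" using spos[rule_format, of 0] by simp
    finally show ?thesis .
  qed
  define h0 where "h0 t = (if 0 \<le> t then ggb_density k n \<sigma> h (sec t) / P else 0)" for t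
  have h0m[measurable]: "h0 \<in> borel_measurable borel"
    unfolding h0_def by measurable
  have h0h: "h0 t = h t" if "t \<ge> 0" for t
    using that Ppos unfolding h0_def ggb_density_def P_def[symmetric] by (simp add: sec_sq)
  define R where "R x = restrict (\<lambda>i. sqnorm n x i) {..k}" for x
  define T where "T r = restrict (\<lambda>i. if i = 0 then r 0 else r i / r 0) {..k}" for r :: "nat \<Rightarrow> real"
  define H where "H r = ennreal (P * h0 (\<Sum>i\<le>k. inverse ((\<sigma> i)\<^sup>2) * r i))" for r :: "nat \<Rightarrow> real"
  define G0 where "G0 r = (\<Prod>i\<le>k. gdens (n i) (r i))" for r :: "nat \<Rightarrow> real"
  define Fp where "Fp y = ennreal (ggb_transformed_density k n \<sigma> h y)" for y
  have Rm[measurable]: "R \<in> measurable ?I ?K"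
    unfolding R_def by (intro measurable_restrict) auto
  have Tm[measurable]: "T \<in> measurable ?K ?K"
    unfolding T_def by (intro measurable_restrict) auto
  have Hm[measurable]: "H \<in> borel_measurable ?K" unfolding H_def by measurable
  have G0m[measurable]: "G0 \<in> borel_measurable ?K" unfolding G0_def by measurable
  have Fp_eq: "Fp y = ennreal (if (\<forall>i\<le>k. y i > 0) then
        pi powr (real (nstar k n) / 2) * y 0 powr (real (nstar k n) / 2 - 1)
        / (\<Prod>i\<le>k. \<sigma> i ^ n i * Gamma (real (n i) / 2))
        * (\<Prod>i\<in>{1..k}. y i powr (real (n i) / 2 - 1))
        * h0 (y 0 * inverse ((\<sigma> 0)\<^sup>2) * (1 + (\<sigma> 0)\<^sup>2 * (\<Sum>i\<in>{1..k}. inverse ((\<sigma> i)\<^sup>2) * y i)))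
      else 0)" for y
  proof (cases "\<forall>i\<le>k. y i > 0")
    case True
    have "0 \<le> y 0 * inverse ((\<sigma> 0)\<^sup>2) * (1 + (\<sigma> 0)\<^sup>2 * (\<Sum>i\<in>{1..k}. inverse ((\<sigma> i)\<^sup>2) * y i))"
    proof -
      have s0: "0 \<le> (\<Sum>i\<in>{1..k}. inverse ((\<sigma> i)\<^sup>2) * y i)"
      proof (intro sum_nonneg)
        fix i assume "i \<in> {1..k}"
        hence "y i > 0" "\<sigma> i > 0" using True spos by auto
        thus "0 \<le> inverse ((\<sigma> i)\<^sup>2) * y i" by simp
      qed
      have "y 0 \<ge> 0" using True by (auto intro: less_imp_le)
      thus ?thesis using s0 by (intro mult_nonneg_nonneg) auto
    qed
    note arg = this
    show ?thesis unfolding Fp_def ggb_transformed_density_def if_P[OF True] h0h[OF arg] by (rule refl)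
  next
    case False
    show ?thesis unfolding Fp_def ggb_transformed_density_def if_not_P[OF False] by (rule refl)
  qed
  have Fpm[measurable]: "Fp \<in> borel_measurable ?K"
    unfolding Fp_eq by measurable
  have Y: "(\<lambda>\<omega>. restrict (\<lambda>i. if i = 0 then sqnorm n (X \<omega>) 0 else sqnorm n (X \<omega>) i / sqnorm n (X \<omega>) 0) {..k})
      = (\<lambda>\<omega>. T (R (X \<omega>)))"
    by (auto simp: T_def R_def fun_eq_iff restrict_def)
  have fH: "ennreal (ggb_density k n \<sigma> h x) = H (R x)" for x
  proof -
    have "(\<Sum>i\<le>k. inverse ((\<sigma> i)\<^sup>2) * R x i) = (\<Sum>i\<le>k. inverse ((\<sigma> i)\<^sup>2) * sqnorm n x i)"
      by (simp add: R_def)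
    thus ?thesis unfolding H_def ggb_density_def P_def[symmetric] using h0h arg_nonneg by simp
  qed
  have main: "distr M ?K (\<lambda>\<omega>. T (R (X \<omega>))) = density ?K Fp"
  proof (rule measure_eqI)
    fix A assume A: "A \<in> sets (distr M ?K (\<lambda>\<omega>. T (R (X \<omega>))))"
    hence A'[measurable]: "A \<in> sets ?K" by simp
    have "emeasure (distr M ?K (\<lambda>\<omega>. T (R (X \<omega>)))) A = emeasure (distr (distr M ?I X) ?K (\<lambda>x. T (R x))) A"
      by (subst distr_distr) (auto simp: comp_def)
    also have "\<dots> = (\<integral>\<^sup>+x. indicator A (T (R x)) \<partial>density ?I (\<lambda>x. ennreal (ggb_density k n \<sigma> h x)))"
    proof -
      have "emeasure (distr (distr M ?I X) ?K (\<lambda>x. T (R x))) A = (\<integral>\<^sup>+r. indicator A r \<partial>distr (distr M ?I X) ?K (\<lambda>x. T (R x)))"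
        by (rule nn_integral_indicator[symmetric]) simp
      also have "\<dots> = (\<integral>\<^sup>+x. indicator A (T (R x)) \<partial>distr M ?I X)"
        by (rule nn_integral_distr) auto
      finally show ?thesis unfolding deq .
    qed
    also have "\<dots> = (\<integral>\<^sup>+x. H (R x) * indicator A (T (R x)) \<partial>?I)"
      by (subst nn_integral_density) (auto simp: fH)
    also have "\<dots> = (\<integral>\<^sup>+r. H r * indicator A (T r) \<partial>distr ?I ?K R)"
      by (subst nn_integral_distr) auto
    also have "\<dots> = (\<integral>\<^sup>+r. G0 r * (H r * indicator A (T r)) \<partial>?K)"
      unfolding R_def using R_law[OF npos] unfolding G0_def[symmetric]
      by (simp add: R_def[symmetric] nn_integral_density)
    also have "\<dots> = (\<integral>\<^sup>+r. (if \<forall>i\<le>k. 0 < r i then G0 r * (H r * indicator A (T r)) else 0) \<partial>?K)"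
    proof (rule nn_integral_cong)
      fix r :: "nat \<Rightarrow> real"
      show "G0 r * (H r * indicator A (T r)) = (if \<forall>i\<le>k. 0 < r i then G0 r * (H r * indicator A (T r)) else 0)"
      proof (cases "\<forall>i\<le>k. 0 < r i")
        case False
        then obtain i where "i \<le> k" "\<not> 0 < r i" by auto
        hence "G0 r = 0" unfolding G0_def by (intro prod_zero bexI[of _ i]) (auto simp: gdens_def)
        thus ?thesis by simp
      qed simp
    qed
    also have "\<dots> = (\<integral>\<^sup>+y. (if \<forall>i\<le>k. 0 < y i then (G0 (Umap k y) * (H (Umap k y) * indicator A (T (Umap k y)))) * ennreal (y 0 ^ k) else 0) \<partial>?K)"
      by (rule CV) measurable
    also have "\<dots> = (\<integral>\<^sup>+y. Fp y * indicator A y \<partial>?K)"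
    proof (rule nn_integral_cong)
      fix y assume "y \<in> space ?K"
      hence ye: "y \<in> extensional {..k}" by (simp add: space_PiM PiE_def)
      show "(if \<forall>i\<le>k. 0 < y i then (G0 (Umap k y) * (H (Umap k y) * indicator A (T (Umap k y)))) * ennreal (y 0 ^ k) else 0) = Fp y * indicator A y"
      proof (cases "\<forall>i\<le>k. 0 < y i")
        case False
        show ?thesis unfolding Fp_def ggb_transformed_density_def if_not_P[OF False] by simp
      next
        case yp: True
        have y0: "y 0 > 0" using yp by auto
        have TU: "T (Umap k y) = y"
          using ye y0 by (auto simp: T_def Umap_def fun_eq_iff restrict_def extensional_def)
        have upos: "Umap k y i > 0" if "i \<le> k" for i
          using yp that y0 by (auto simp: Umap_def)
        have G0U: "G0 (Umap k y) = ennreal (\<Prod>i\<le>k. pi powr (real (n i) / 2) / Gamma (real (n i) / 2) * Umap k y i powr (real (n i) / 2 - 1))"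
          unfolding G0_def gdens_def using upos npos
          by (subst prod_ennreal[symmetric]) (auto intro!: prod.cong divide_nonneg_pos Gamma_real_pos)
        have argnn: "0 \<le> (\<Sum>i\<le>k. inverse ((\<sigma> i)\<^sup>2) * Umap k y i)"
        proof (intro sum_nonneg)
          fix i assume "i \<in> {..k}"
          hence "Umap k y i > 0" "\<sigma> i > 0" using upos spos by auto
          thus "0 \<le> inverse ((\<sigma> i)\<^sup>2) * Umap k y i" by simp
        qed
        have HU: "H (Umap k y) = ennreal (P * h (\<Sum>i\<le>k. inverse ((\<sigma> i)\<^sup>2) * Umap k y i))"
          unfolding H_def using h0h[OF argnn] by simp
        have nn1: "0 \<le> (\<Prod>i\<le>k. pi powr (real (n i) / 2) / Gamma (real (n i) / 2) * Umap k y i powr (real (n i) / 2 - 1))"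
          using npos by (auto intro!: prod_nonneg mult_nonneg_nonneg divide_nonneg_pos Gamma_real_pos)
        have nn2: "0 \<le> P * h (\<Sum>i\<le>k. inverse ((\<sigma> i)\<^sup>2) * Umap k y i)"
          using Ppos hpos argnn by auto
        have "G0 (Umap k y) * (H (Umap k y) * indicator A (T (Umap k y))) * ennreal (y 0 ^ k)
            = ennreal ((\<Prod>i\<le>k. pi powr (real (n i) / 2) / Gamma (real (n i) / 2) * Umap k y i powr (real (n i) / 2 - 1))
                * (P * h (\<Sum>i\<le>k. inverse ((\<sigma> i)\<^sup>2) * Umap k y i)) * y 0 ^ k) * indicator A y"
          unfolding G0U HU TU by (rule enn_aux[OF nn1 nn2]) (use y0 in simp)
        also have "\<dots> = Fp y * indicator A y"
          unfolding dens_alg[OF yp spos npos] P_def Fp_def ggb_transformed_density_def using yp by simp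
        finally show ?thesis using yp by simp
      qed
    qed
    also have "\<dots> = emeasure (density ?K Fp) A"
      by (simp add: emeasure_density)
    finally show "emeasure (distr M ?K (\<lambda>\<omega>. T (R (X \<omega>)))) A = emeasure (density ?K Fp) A" .
  qed simp
  show ?thesis
    unfolding distributed_def Y Fp_def[symmetric] using main Fpm by auto
qed

end
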